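(* Consider the cubic ($p=3$) Gauss–Lobatto element on $[-1,1]$ and real constants $\bar\varepsilon_1,\bar\varepsilon_2,\bar\varepsilon_3$. Define the artificial dissipation matrix $$\mathcal{D}_{AD}=\bar\varepsilon_1(\mathcal{D}_x)^T\mathcal{P}\mathcal{D}_x+\bar\varepsilon_2(\mathcal{D}_x^2)^T\mathcal{P}\mathcal{D}_x^2+\bar\varepsilon_3(\mathcal{D}_x^3)^T\mathcal{P}\mathcal{D}_x^3\in\mathbb{R}^{4\times4}.$$ If $$\bar\varepsilon_1>0,\qquad\bar\varepsilon_2\ge-\frac{\bar\varepsilon_1}{3},\qquad\bar\varepsilon_3\ge-\frac{\bar\varepsilon_1}{45}-\frac{\bar\varepsilon_2}{3},$$ then $\mathcal{D}_{AD}$ is positive semi-definite.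
   Context: For $p=3$ on $[-1,1]$ the Gauss–Lobatto nodes are $-1,-1/\sqrt5,1/\sqrt5,1$ with weights $1/6,5/6,5/6,1/6$; $\mathcal{P}$ is the diagonal matrix of these weights; $\ell_0,\dots,\ell_3$ are the cubic Lagrange basis polynomials on these nodes; $\mathcal{D}_x$ is the $4\times4$ matrix with $(\mathcal{D}_x)_{kj}=\ell_j'(x_k)$, and $\mathcal{D}_x^i$ denotes its $i$-th power, whose $(k,j)$ entry is $\ell_j^{(i)}(x_k)$. *)

theory Defs
  imports "HOL-Analysis.Analysis"
begin

text \<open>Cubic (p = 3) Gauss--Lobatto element on [-1,1]. Indices range over {0..<4};
  4x4 matrices are represented as functions nat => nat => real, only entries with
  indices < 4 being relevant.\<close>

definition gl_node :: "nat \<Rightarrow> real" where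
  "gl_node k = (if k = 0 then -1 else if k = 1 then - 1 / sqrt 5
                else if k = 2 then 1 / sqrt 5 else 1)"

definition gl_weight :: "nat \<Rightarrow> real" where
  "gl_weight k = (if k = 0 \<or> k = 3 then 1/6 else 5/6)"

definition lagr :: "nat \<Rightarrow> real \<Rightarrow> real" where
  "lagr j x = (\<Prod>m\<in>{0..<4} - {j}. (x - gl_node m) / (gl_node j - gl_node m))"

definition Pmat :: "nat \<Rightarrow> nat \<Rightarrow> real" where
  "Pmat k j = (if k = j then gl_weight k else 0)"

definition Dx :: "nat \<Rightarrow> nat \<Rightarrow> real" where
  "Dx k j = deriv (lagr j) (gl_node k)"

definition mmul :: "(nat \<Rightarrow> nat \<Rightarrow> real) \<Rightarrow> (nat \<Rightarrow> nat \<Rightarrow> real) \<Rightarrow> nat \<Rightarrow> nat \<Rightarrow> real" where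
  "mmul A B i j = (\<Sum>l<4. A i l * B l j)"

definition mtrans :: "(nat \<Rightarrow> nat \<Rightarrow> real) \<Rightarrow> nat \<Rightarrow> nat \<Rightarrow> real" where
  "mtrans A i j = A j i"

fun mpow :: "(nat \<Rightarrow> nat \<Rightarrow> real) \<Rightarrow> nat \<Rightarrow> nat \<Rightarrow> nat \<Rightarrow> real" where
  "mpow A 0 = (\<lambda>i j. if i = j then 1 else 0)"
| "mpow A (Suc n) = mmul (mpow A n) A"

definition DAD :: "real \<Rightarrow> real \<Rightarrow> real \<Rightarrow> nat \<Rightarrow> nat \<Rightarrow> real" where
  "DAD e1 e2 e3 i j =
     e1 * mmul (mmul (mtrans (mpow Dx 1)) Pmat) (mpow Dx 1) i j
   + e2 * mmul (mmul (mtrans (mpow Dx 2)) Pmat) (mpow Dx 2) i j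
   + e3 * mmul (mmul (mtrans (mpow Dx 3)) Pmat) (mpow Dx 3) i j"

definition psd4 :: "(nat \<Rightarrow> nat \<Rightarrow> real) \<Rightarrow> bool" where
  "psd4 A \<longleftrightarrow> (\<forall>v :: nat \<Rightarrow> real. (\<Sum>i<4. \<Sum>j<4. v i * A i j * v j) \<ge> 0)"

end

theory Submission
  imports Defs
begin

lemma deriv3: "deriv (\<lambda>x::real. (x-a)*((x-b)*(x-c))/K) y
   = ((y-b)*(y-c)+(y-a)*(y-c)+(y-a)*(y-b))/K"
proof -
  have "((\<lambda>x::real. (x-a)*((x-b)*(x-c))) has_real_derivative
     ((y-b)*(y-c)+(y-a)*(y-c)+(y-a)*(y-b))) (at y)"
    by (auto intro!: derivative_eq_intros simp: algebra_simps)
  hence "((\<lambda>x::real. (x-a)*((x-b)*(x-c))/K) has_real_derivative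
     ((y-b)*(y-c)+(y-a)*(y-c)+(y-a)*(y-b))/K) (at y)"
    by (rule DERIV_cdivide)
  thus ?thesis by (rule DERIV_imp_deriv)
qed

lemma s5: "sqrt 5 * sqrt 5 = (5::real)" by simp

lemma set0: "{0..<4::nat} - {0} = {1,2,3}" by auto
lemma set1: "{0..<4::nat} - {Suc 0} = {0,2,3}" by auto
lemma set2: "{0..<4::nat} - {2} = {0,1,3}" by auto
lemma set3: "{0..<4::nat} - {3} = {0,1,2}" by auto

lemma lagr0: "lagr 0 = (\<lambda>x. (x - gl_node 1)*((x - gl_node 2)*(x - gl_node 3))/((gl_node 0 - gl_node 1) * ((gl_node 0 - gl_node 2) * (gl_node 0 - gl_node 3))))"
  by (simp add: lagr_def set0 fun_eq_iff)
lemma lagr1: "lagr 1 = (\<lambda>x. (x - gl_node 0)*((x - gl_node 2)*(x - gl_node 3))/((gl_node 1 - gl_node 0) * ((gl_node 1 - gl_node 2) * (gl_node 1 - gl_node 3))))"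
  by (simp add: lagr_def set1 fun_eq_iff)
lemma lagr2: "lagr 2 = (\<lambda>x. (x - gl_node 0)*((x - gl_node 1)*(x - gl_node 3))/((gl_node 2 - gl_node 0) * ((gl_node 2 - gl_node 1) * (gl_node 2 - gl_node 3))))"
  by (simp add: lagr_def set2 fun_eq_iff)
lemma lagr3: "lagr 3 = (\<lambda>x. (x - gl_node 0)*((x - gl_node 1)*(x - gl_node 2))/((gl_node 3 - gl_node 0) * ((gl_node 3 - gl_node 1) * (gl_node 3 - gl_node 2))))"
  by (simp add: lagr_def set3 fun_eq_iff)

lemma Dx_0_0: "Dx 0 0 = (-3) + (0) * sqrt 5"
  unfolding Dx_def lagr0 deriv3 by (simp add: gl_node_def field_simps s5)

lemma Dx_0_1: "Dx 0 1 = (5/4) + (5/4) * sqrt 5"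
  unfolding Dx_def lagr1 deriv3 by (simp add: gl_node_def field_simps s5)

lemma Dx_0_2: "Dx 0 2 = (5/4) + (-5/4) * sqrt 5"
  unfolding Dx_def lagr2 deriv3 by (simp add: gl_node_def field_simps s5)

lemma Dx_0_3: "Dx 0 3 = (1/2) + (0) * sqrt 5"
  unfolding Dx_def lagr3 deriv3 by (simp add: gl_node_def field_simps s5)

lemma Dx_1_0: "Dx 1 0 = (-1/4) + (-1/4) * sqrt 5"
  unfolding Dx_def lagr0 deriv3 by (simp add: gl_node_def field_simps s5)

lemma Dx_1_1: "Dx 1 1 = (0) + (0) * sqrt 5"
  unfolding Dx_def lagr1 deriv3 by (simp add: gl_node_def field_simps s5)

lemma Dx_1_2: "Dx 1 2 = (0) + (1/2) * sqrt 5"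
  unfolding Dx_def lagr2 deriv3 by (simp add: gl_node_def field_simps s5)

lemma Dx_1_3: "Dx 1 3 = (1/4) + (-1/4) * sqrt 5"
  unfolding Dx_def lagr3 deriv3 by (simp add: gl_node_def field_simps s5)

lemma Dx_2_0: "Dx 2 0 = (-1/4) + (1/4) * sqrt 5"
  unfolding Dx_def lagr0 deriv3 by (simp add: gl_node_def field_simps s5)

lemma Dx_2_1: "Dx 2 1 = (0) + (-1/2) * sqrt 5"
  unfolding Dx_def lagr1 deriv3 by (simp add: gl_node_def field_simps s5)

lemma Dx_2_2: "Dx 2 2 = (0) + (0) * sqrt 5"
  unfolding Dx_def lagr2 deriv3 by (simp add: gl_node_def field_simps s5)

lemma Dx_2_3: "Dx 2 3 = (1/4) + (1/4) * sqrt 5"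
  unfolding Dx_def lagr3 deriv3 by (simp add: gl_node_def field_simps s5)

lemma Dx_3_0: "Dx 3 0 = (-1/2) + (0) * sqrt 5"
  unfolding Dx_def lagr0 deriv3 by (simp add: gl_node_def field_simps s5)

lemma Dx_3_1: "Dx 3 1 = (-5/4) + (5/4) * sqrt 5"
  unfolding Dx_def lagr1 deriv3 by (simp add: gl_node_def field_simps s5)

lemma Dx_3_2: "Dx 3 2 = (-5/4) + (-5/4) * sqrt 5"
  unfolding Dx_def lagr2 deriv3 by (simp add: gl_node_def field_simps s5)

lemma Dx_3_3: "Dx 3 3 = (3) + (0) * sqrt 5"
  unfolding Dx_def lagr3 deriv3 by (simp add: gl_node_def field_simps s5)

definition app :: "(nat \<Rightarrow> nat \<Rightarrow> real) \<Rightarrow> (nat \<Rightarrow> real) \<Rightarrow> nat \<Rightarrow> real" where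
  "app M v k = (\<Sum>j<4. M k j * v j)"

lemma app_mmul: "app (mmul A B) v k = app A (app B v) k"
proof -
  have "app (mmul A B) v k = (\<Sum>j<4. \<Sum>l<4. A k l * (B l j * v j))"
    unfolding app_def mmul_def by (simp add: sum_distrib_right mult.assoc)
  also have "\<dots> = (\<Sum>l<4. \<Sum>j<4. A k l * (B l j * v j))" by (rule sum.swap)
  also have "\<dots> = app A (app B v) k" unfolding app_def by (simp add: sum_distrib_left)
  finally show ?thesis .
qed

lemma app_mpow_Suc: "app (mpow A (Suc n)) v k = app (mpow A n) (app A v) k"
  by (simp add: app_mmul)

lemma app_id: "k < 4 \<Longrightarrow> app (mpow A 0) v k = v k"
proof -
  assume "k < 4"
  have "(\<lambda>j. (if k = j then 1 else 0) * v j) = (\<lambda>j. if j = k then v k else 0)" by auto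
  thus ?thesis unfolding app_def using \<open>k < 4\<close> by (simp only: mpow.simps) simp
qed

lemma mtP: "l < 4 \<Longrightarrow> mmul (mtrans A) Pmat i l = A l i * gl_weight l"
proof -
  assume l: "l < 4"
  have "mmul (mtrans A) Pmat i l = (\<Sum>m<4. if m = l then A l i * gl_weight l else 0)"
    unfolding mmul_def mtrans_def Pmat_def by (rule sum.cong) auto
  thus ?thesis using l by simp
qed

lemma quad: "(\<Sum>i<4. \<Sum>j<4. v i * mmul (mmul (mtrans A) Pmat) A i j * v j)
   = (\<Sum>k<4. gl_weight k * (app A v k)^2)"
proof -
  have "\<And>i j. mmul (mmul (mtrans A) Pmat) A i j = (\<Sum>l<4. A l i * gl_weight l * A l j)"
    unfolding mmul_def[of "mmul (mtrans A) Pmat"] by (rule sum.cong) (auto simp: mtP)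
  hence "(\<Sum>i<4. \<Sum>j<4. v i * mmul (mmul (mtrans A) Pmat) A i j * v j)
     = (\<Sum>i<4. \<Sum>j<4. \<Sum>l<4. gl_weight l * ((A l i * v i) * (A l j * v j)))"
    by (simp add: sum_distrib_left sum_distrib_right mult_ac)
  also have "\<dots> = (\<Sum>i<4. \<Sum>l<4. \<Sum>j<4. gl_weight l * ((A l i * v i) * (A l j * v j)))"
    by (rule sum.cong[OF refl], rule sum.swap)
  also have "\<dots> = (\<Sum>l<4. \<Sum>i<4. \<Sum>j<4. gl_weight l * ((A l i * v i) * (A l j * v j)))"
    by (rule sum.swap)
  also have "\<dots> = (\<Sum>l<4. gl_weight l * ((\<Sum>i<4. A l i * v i) * (\<Sum>j<4. A l j * v j)))"
    by (simp only: sum_product, simp only: sum_distrib_left)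
  finally show ?thesis unfolding app_def power2_eq_square .
qed

lemma lin2:
  fixes r v0 v1 v2 v3 w0 w1 w2 w3 z0 z1 z2 z3 :: real
  assumes "r * r = 5"
    and "w0 = ((-3) + (0) * r) * v0 + ((5/4) + (5/4) * r) * v1 + ((5/4) + (-5/4) * r) * v2 + ((1/2) + (0) * r) * v3"
    and "w1 = ((-1/4) + (-1/4) * r) * v0 + ((0) + (0) * r) * v1 + ((0) + (1/2) * r) * v2 + ((1/4) + (-1/4) * r) * v3"
    and "w2 = ((-1/4) + (1/4) * r) * v0 + ((0) + (-1/2) * r) * v1 + ((0) + (0) * r) * v2 + ((1/4) + (1/4) * r) * v3"
    and "w3 = ((-1/2) + (0) * r) * v0 + ((-5/4) + (5/4) * r) * v1 + ((-5/4) + (-5/4) * r) * v2 + ((3) + (0) * r) * v3"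
    and "z0 = ((-3) + (0) * r) * w0 + ((5/4) + (5/4) * r) * w1 + ((5/4) + (-5/4) * r) * w2 + ((1/2) + (0) * r) * w3"
    and "z1 = ((-1/4) + (-1/4) * r) * w0 + ((0) + (0) * r) * w1 + ((0) + (1/2) * r) * w2 + ((1/4) + (-1/4) * r) * w3"
    and "z2 = ((-1/4) + (1/4) * r) * w0 + ((0) + (-1/2) * r) * w1 + ((0) + (0) * r) * w2 + ((1/4) + (1/4) * r) * w3"
    and "z3 = ((-1/2) + (0) * r) * w0 + ((-5/4) + (5/4) * r) * w1 + ((-5/4) + (-5/4) * r) * w2 + ((3) + (0) * r) * w3"
  shows "z0 = ((5) + (0) * r) * v0 + ((-5/4) + (-15/4) * r) * v1 + ((-5/4) + (15/4) * r) * v2 + ((-5/2) + (0) * r) * v3"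
    and "z1 = ((5/4) + (3/4) * r) * v0 + ((-5) + (0) * r) * v1 + ((5/2) + (0) * r) * v2 + ((5/4) + (-3/4) * r) * v3"
    and "z2 = ((5/4) + (-3/4) * r) * v0 + ((5/2) + (0) * r) * v1 + ((-5) + (0) * r) * v2 + ((5/4) + (3/4) * r) * v3"
    and "z3 = ((-5/2) + (0) * r) * v0 + ((-5/4) + (15/4) * r) * v1 + ((-5/4) + (-15/4) * r) * v2 + ((5) + (0) * r) * v3"
proof -
  have rr: "\<And>x. r * (r * x) = 5 * x" using assms(1) by (metis mult.assoc mult.commute)
  show "z0 = ((5) + (0) * r) * v0 + ((-5/4) + (-15/4) * r) * v1 + ((-5/4) + (15/4) * r) * v2 + ((-5/2) + (0) * r) * v3" unfolding assms(2-) by (simp add: field_simps rr)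
  show "z1 = ((5/4) + (3/4) * r) * v0 + ((-5) + (0) * r) * v1 + ((5/2) + (0) * r) * v2 + ((5/4) + (-3/4) * r) * v3" unfolding assms(2-) by (simp add: field_simps rr)
  show "z2 = ((5/4) + (-3/4) * r) * v0 + ((5/2) + (0) * r) * v1 + ((-5) + (0) * r) * v2 + ((5/4) + (3/4) * r) * v3" unfolding assms(2-) by (simp add: field_simps rr)
  show "z3 = ((-5/2) + (0) * r) * v0 + ((-5/4) + (15/4) * r) * v1 + ((-5/4) + (-15/4) * r) * v2 + ((5) + (0) * r) * v3" unfolding assms(2-) by (simp add: field_simps rr)
qed

lemma lin3:
  fixes r v0 v1 v2 v3 w0 w1 w2 w3 z0 z1 z2 z3 :: real
  assumes "r * r = 5"
    and "w0 = ((5) + (0) * r) * v0 + ((-5/4) + (-15/4) * r) * v1 + ((-5/4) + (15/4) * r) * v2 + ((-5/2) + (0) * r) * v3"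
    and "w1 = ((5/4) + (3/4) * r) * v0 + ((-5) + (0) * r) * v1 + ((5/2) + (0) * r) * v2 + ((5/4) + (-3/4) * r) * v3"
    and "w2 = ((5/4) + (-3/4) * r) * v0 + ((5/2) + (0) * r) * v1 + ((-5) + (0) * r) * v2 + ((5/4) + (3/4) * r) * v3"
    and "w3 = ((-5/2) + (0) * r) * v0 + ((-5/4) + (15/4) * r) * v1 + ((-5/4) + (-15/4) * r) * v2 + ((5) + (0) * r) * v3"
    and "z0 = ((-3) + (0) * r) * w0 + ((5/4) + (5/4) * r) * w1 + ((5/4) + (-5/4) * r) * w2 + ((1/2) + (0) * r) * w3"
    and "z1 = ((-1/4) + (-1/4) * r) * w0 + ((0) + (0) * r) * w1 + ((0) + (1/2) * r) * w2 + ((1/4) + (-1/4) * r) * w3"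
    and "z2 = ((-1/4) + (1/4) * r) * w0 + ((0) + (-1/2) * r) * w1 + ((0) + (0) * r) * w2 + ((1/4) + (1/4) * r) * w3"
    and "z3 = ((-1/2) + (0) * r) * w0 + ((-5/4) + (5/4) * r) * w1 + ((-5/4) + (-5/4) * r) * w2 + ((3) + (0) * r) * w3"
  shows "z0 = ((-15/4) + (0) * r) * v0 + ((0) + (15/4) * r) * v1 + ((0) + (-15/4) * r) * v2 + ((15/4) + (0) * r) * v3"
    and "z1 = ((-15/4) + (0) * r) * v0 + ((0) + (15/4) * r) * v1 + ((0) + (-15/4) * r) * v2 + ((15/4) + (0) * r) * v3"
    and "z2 = ((-15/4) + (0) * r) * v0 + ((0) + (15/4) * r) * v1 + ((0) + (-15/4) * r) * v2 + ((15/4) + (0) * r) * v3"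
    and "z3 = ((-15/4) + (0) * r) * v0 + ((0) + (15/4) * r) * v1 + ((0) + (-15/4) * r) * v2 + ((15/4) + (0) * r) * v3"
proof -
  have rr: "\<And>x. r * (r * x) = 5 * x" using assms(1) by (metis mult.assoc mult.commute)
  show "z0 = ((-15/4) + (0) * r) * v0 + ((0) + (15/4) * r) * v1 + ((0) + (-15/4) * r) * v2 + ((15/4) + (0) * r) * v3" unfolding assms(2-) by (simp add: field_simps rr)
  show "z1 = ((-15/4) + (0) * r) * v0 + ((0) + (15/4) * r) * v1 + ((0) + (-15/4) * r) * v2 + ((15/4) + (0) * r) * v3" unfolding assms(2-) by (simp add: field_simps rr)
  show "z2 = ((-15/4) + (0) * r) * v0 + ((0) + (15/4) * r) * v1 + ((0) + (-15/4) * r) * v2 + ((15/4) + (0) * r) * v3" unfolding assms(2-) by (simp add: field_simps rr)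
  show "z3 = ((-15/4) + (0) * r) * v0 + ((0) + (15/4) * r) * v1 + ((0) + (-15/4) * r) * v2 + ((15/4) + (0) * r) * v3" unfolding assms(2-) by (simp add: field_simps rr)
qed

lemma keyA:
  fixes r v0 v1 v2 v3 w0 w1 w2 w3 :: real
  assumes "r * r = 5"
    and "w0 = ((-3) + (0) * r) * v0 + ((5/4) + (5/4) * r) * v1 + ((5/4) + (-5/4) * r) * v2 + ((1/2) + (0) * r) * v3"
    and "w1 = ((-1/4) + (-1/4) * r) * v0 + ((0) + (0) * r) * v1 + ((0) + (1/2) * r) * v2 + ((1/4) + (-1/4) * r) * v3"
    and "w2 = ((-1/4) + (1/4) * r) * v0 + ((0) + (-1/2) * r) * v1 + ((0) + (0) * r) * v2 + ((1/4) + (1/4) * r) * v3"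
    and "w3 = ((-1/2) + (0) * r) * v0 + ((-5/4) + (5/4) * r) * v1 + ((-5/4) + (-5/4) * r) * v2 + ((3) + (0) * r) * v3"
  shows "(1/6 * w0^2 + 5/6 * w1^2 + 5/6 * w2^2 + 1/6 * w3^2) = 2 * ((v3 - v0)/2)^2 + 2/3 * (5/4 * (v0 - v1 - v2 + v3))^2 + 2/5 * (5/4 * (-v0 + r * v1 - r * v2 + v3))^2"
  proof -
    have rr: "\<And>x. r * (r * x) = 5 * x" using assms(1) by (metis mult.assoc mult.commute)
    show ?thesis unfolding assms(2-) by (simp add: field_simps power2_eq_square rr)
  qed
lemma keyB:
  fixes r v0 v1 v2 v3 w0 w1 w2 w3 :: real
  assumes "r * r = 5"
    and "w0 = ((5) + (0) * r) * v0 + ((-5/4) + (-15/4) * r) * v1 + ((-5/4) + (15/4) * r) * v2 + ((-5/2) + (0) * r) * v3"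
    and "w1 = ((5/4) + (3/4) * r) * v0 + ((-5) + (0) * r) * v1 + ((5/2) + (0) * r) * v2 + ((5/4) + (-3/4) * r) * v3"
    and "w2 = ((5/4) + (-3/4) * r) * v0 + ((5/2) + (0) * r) * v1 + ((-5) + (0) * r) * v2 + ((5/4) + (3/4) * r) * v3"
    and "w3 = ((-5/2) + (0) * r) * v0 + ((-5/4) + (15/4) * r) * v1 + ((-5/4) + (-15/4) * r) * v2 + ((5) + (0) * r) * v3"
  shows "(1/6 * w0^2 + 5/6 * w1^2 + 5/6 * w2^2 + 1/6 * w3^2) = 2 * (5/4 * (v0 - v1 - v2 + v3))^2 + 6 * (5/4 * (-v0 + r * v1 - r * v2 + v3))^2"
  proof -
    have rr: "\<And>x. r * (r * x) = 5 * x" using assms(1) by (metis mult.assoc mult.commute)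
    show ?thesis unfolding assms(2-) by (simp add: field_simps power2_eq_square rr)
  qed
lemma keyC:
  fixes r v0 v1 v2 v3 w0 w1 w2 w3 :: real
  assumes "r * r = 5"
    and "w0 = ((-15/4) + (0) * r) * v0 + ((0) + (15/4) * r) * v1 + ((0) + (-15/4) * r) * v2 + ((15/4) + (0) * r) * v3"
    and "w1 = ((-15/4) + (0) * r) * v0 + ((0) + (15/4) * r) * v1 + ((0) + (-15/4) * r) * v2 + ((15/4) + (0) * r) * v3"
    and "w2 = ((-15/4) + (0) * r) * v0 + ((0) + (15/4) * r) * v1 + ((0) + (-15/4) * r) * v2 + ((15/4) + (0) * r) * v3"
    and "w3 = ((-15/4) + (0) * r) * v0 + ((0) + (15/4) * r) * v1 + ((0) + (-15/4) * r) * v2 + ((15/4) + (0) * r) * v3"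
  shows "(1/6 * w0^2 + 5/6 * w1^2 + 5/6 * w2^2 + 1/6 * w3^2) = 18 * (5/4 * (-v0 + r * v1 - r * v2 + v3))^2"
  proof -
    have rr: "\<And>x. r * (r * x) = 5 * x" using assms(1) by (metis mult.assoc mult.commute)
    show ?thesis unfolding assms(2-) by (simp add: field_simps power2_eq_square rr)
  qed

lemma sum4: "(\<Sum>j<4. f j) = f 0 + f 1 + f 2 + (f 3::real)" for f :: "nat \<Rightarrow> real"
  by (simp add: eval_nat_numeral)

lemma appDx0: "app Dx u 0 = ((-3) + (0) * sqrt 5) * u 0 + ((5/4) + (5/4) * sqrt 5) * u 1 + ((5/4) + (-5/4) * sqrt 5) * u 2 + ((1/2) + (0) * sqrt 5) * u 3"
  unfolding app_def sum4 Dx_0_0 Dx_0_1 Dx_0_2 Dx_0_3 by (simp add: algebra_simps)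

lemma appDx1: "app Dx u 1 = ((-1/4) + (-1/4) * sqrt 5) * u 0 + ((0) + (0) * sqrt 5) * u 1 + ((0) + (1/2) * sqrt 5) * u 2 + ((1/4) + (-1/4) * sqrt 5) * u 3"
  unfolding app_def sum4 Dx_1_0 Dx_1_1 Dx_1_2 Dx_1_3 by (simp add: algebra_simps)

lemma appDx2: "app Dx u 2 = ((-1/4) + (1/4) * sqrt 5) * u 0 + ((0) + (-1/2) * sqrt 5) * u 1 + ((0) + (0) * sqrt 5) * u 2 + ((1/4) + (1/4) * sqrt 5) * u 3"
  unfolding app_def sum4 Dx_2_0 Dx_2_1 Dx_2_2 Dx_2_3 by (simp add: algebra_simps)

lemma appDx3: "app Dx u 3 = ((-1/2) + (0) * sqrt 5) * u 0 + ((-5/4) + (5/4) * sqrt 5) * u 1 + ((-5/4) + (-5/4) * sqrt 5) * u 2 + ((3) + (0) * sqrt 5) * u 3"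
  unfolding app_def sum4 Dx_3_0 Dx_3_1 Dx_3_2 Dx_3_3 by (simp add: algebra_simps)

lemma Qform: "(\<Sum>k<4. gl_weight k * (u k)^2) = 1/6 * (u 0)^2 + 5/6 * (u 1)^2 + 5/6 * (u 2)^2 + 1/6 * (u 3)^2"
  by (simp add: sum4 gl_weight_def)

lemma app_id2: "k < 4 \<Longrightarrow> app (\<lambda>i j. if i = j then 1 else 0) v k = v k"
  using app_id[of k Dx v] by simp

lemma mp1: "k < 4 \<Longrightarrow> app (mpow Dx 1) v k = app Dx v k"
  by (simp add: app_mmul app_id2)
lemma mp2: "k < 4 \<Longrightarrow> app (mpow Dx 2) v k = app Dx (app Dx v) k"
  by (simp add: app_mmul app_id2 eval_nat_numeral)
lemma mp3: "k < 4 \<Longrightarrow> app (mpow Dx 3) v k = app Dx (app Dx (app Dx v)) k"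
  by (simp add: app_mmul app_id2 eval_nat_numeral)

lemma Qpow: "(\<Sum>k<4. gl_weight k * (app (mpow Dx n) v k)^2) = (\<Sum>k<4. gl_weight k * (f k)^2)"
  if "\<And>k. k < 4 \<Longrightarrow> app (mpow Dx n) v k = f k"
  using that by (intro sum.cong) auto

theorem proposition6:
  fixes e1 e2 e3 :: real
  assumes "e1 > 0" and "e2 \<ge> - e1 / 3" and "e3 \<ge> - e1 / 45 - e2 / 3"
  shows "psd4 (DAD e1 e2 e3)"
  unfolding psd4_def
proof
  fix v :: "nat \<Rightarrow> real"
  define S where "S n = (\<Sum>i<4. \<Sum>j<4. v i * mmul (mmul (mtrans (mpow Dx n)) Pmat) (mpow Dx n) i j * v j)" for n
  have split: "(\<Sum>i<4. \<Sum>j<4. v i * DAD e1 e2 e3 i j * v j) = e1 * S 1 + e2 * S 2 + e3 * S 3"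
    unfolding S_def DAD_def by (simp add: algebra_simps sum.distrib sum_distrib_left)
  define w where "w = app Dx v"
  define z where "z = app Dx w"
  define y where "y = app Dx z"
  let ?r = "sqrt 5"
  have rr: "?r * ?r = 5" by simp
  note W = appDx0[of v, folded w_def] appDx1[of v, folded w_def] appDx2[of v, folded w_def] appDx3[of v, folded w_def]
  note Z0 = appDx0[of w, folded z_def] appDx1[of w, folded z_def] appDx2[of w, folded z_def] appDx3[of w, folded z_def]
  note Y0 = appDx0[of z, folded y_def] appDx1[of z, folded y_def] appDx2[of z, folded y_def] appDx3[of z, folded y_def]
  note Z = lin2[OF rr W Z0]
  note Y = lin3[OF rr Z Y0]
  define a where "a = (v 3 - v 0)/2"
  define b where "b = 5/4 * (v 0 - v 1 - v 2 + v 3)"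
  define g where "g = 5/4 * (- v 0 + ?r * v 1 - ?r * v 2 + v 3)"
  have S1: "S 1 = 2 * a^2 + 2/3 * b^2 + 2/5 * g^2"
  proof -
    have "S 1 = (\<Sum>k<4. gl_weight k * (w k)^2)" unfolding S_def quad w_def by (rule Qpow, rule mp1)
    also have "\<dots> = 2 * a^2 + 2/3 * b^2 + 2/5 * g^2" unfolding Qform a_def b_def g_def by (rule keyA[OF rr W])
    finally show ?thesis .
  qed
  have S2: "S 2 = 2 * b^2 + 6 * g^2"
  proof -
    have "S 2 = (\<Sum>k<4. gl_weight k * (z k)^2)" unfolding S_def quad z_def w_def by (rule Qpow, rule mp2)
    also have "\<dots> = 2 * b^2 + 6 * g^2" unfolding Qform b_def g_def by (rule keyB[OF rr Z])
    finally show ?thesis .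
  qed
  have S3: "S 3 = 18 * g^2"
  proof -
    have "S 3 = (\<Sum>k<4. gl_weight k * (y k)^2)" unfolding S_def quad y_def z_def w_def by (rule Qpow, rule mp3)
    also have "\<dots> = 18 * g^2" unfolding Qform g_def by (rule keyC[OF rr Y])
    finally show ?thesis .
  qed
  have "e1 * S 1 + e2 * S 2 + e3 * S 3 = (2*e1) * a^2 + (2*e1/3 + 2*e2) * b^2 + (2*e1/5 + 6*e2 + 18*e3) * g^2"
    unfolding S1 S2 S3 by (simp add: algebra_simps)
  also have "\<dots> \<ge> 0"
  proof -
    have c1: "2*e1 \<ge> 0" and c2: "2*e1/3 + 2*e2 \<ge> 0" and c3: "2*e1/5 + 6*e2 + 18*e3 \<ge> 0"
      using assms by linarith+
    have t1: "0 \<le> (2*e1) * a^2" by (rule mult_nonneg_nonneg[OF c1 zero_le_power2])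
    have t2: "0 \<le> (2*e1/3 + 2*e2) * b^2" by (rule mult_nonneg_nonneg[OF c2 zero_le_power2])
    have t3: "0 \<le> (2*e1/5 + 6*e2 + 18*e3) * g^2" by (rule mult_nonneg_nonneg[OF c3 zero_le_power2])
    show ?thesis using t1 t2 t3 by linarith
  qed
  finally show "(\<Sum>i<4. \<Sum>j<4. v i * DAD e1 e2 e3 i j * v j) \<ge> 0" unfolding split .
qed

end
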